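(* Let $q$ and $x$ be complex numbers with $|q|<1$, and let $(a_k)_{k=-\infty}^{\infty}$ be a sequence of complex numbers such that the double series below converge absolutely (and $(-x;q)_j\neq 0$ for all $j\ge 0$). Then $$\sum_{i,j\geq 0} \frac{a_{i-j}\,q^{\frac{j(j-1)}{2}}x^j}{(q;q)_i(q;q)_j} =(-x;q)_\infty \sum_{i,j\geq 0} \frac{a_{i-j}\,q^{\frac{j(j-1)}{2}+ij} x^j}{(q;q)_i(q;q)_j(-x;q)_j}.$$
   Context: Standard $q$-Pochhammer notation: $(a;q)_0=1$, $(a;q)_n=\prod_{k=0}^{n-1}(1-aq^k)$, $(a;q)_\infty=\prod_{k=0}^{\infty}(1-aq^k)$, and $(a_1,\dots,a_m;q)_n=(a_1;q)_n\cdots(a_m;q)_n$ for $n\in\mathbb{N}\cup\{\infty\}$. *)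

theory Defs
  imports "HOL-Analysis.Analysis"
begin

definition qpoch :: "complex \<Rightarrow> complex \<Rightarrow> nat \<Rightarrow> complex" where
  "qpoch a q n = (\<Prod>k<n. 1 - a * q ^ k)"

definition qpoch_inf :: "complex \<Rightarrow> complex \<Rightarrow> complex" where
  "qpoch_inf a q = (\<Prod>k. 1 - a * q ^ k)"

end

theory Submission
  imports Defs
begin


definition tri :: "nat \<Rightarrow> nat" where "tri n = n * (n - 1) div 2"

lemma tri_Suc: "tri (Suc n) = tri n + n"
  unfolding tri_def by (induct n) auto

lemma tri_add: "tri (j + k) = tri j + tri k + j * k"
  proof (induct k)
  case (Suc k)
  then show ?case by (simp only: add_Suc_right tri_Suc) (simp add: algebra_simps)
qed (simp add: tri_def)

lemma qpoch_Suc: "qpoch a q (Suc n) = qpoch a q n * (1 - a * q ^ n)"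
  by (simp add: qpoch_def)

lemma qpoch_0[simp]: "qpoch a q 0 = 1"
  by (simp add: qpoch_def)

lemma one_minus_qpow_nz: "norm (q::complex) < 1 \<Longrightarrow> 1 - q ^ Suc n \<noteq> 0"
proof
  assume "norm q < 1" "1 - q ^ Suc n = 0"
  then have "q ^ Suc n = 1" by simp
  then have "norm q ^ Suc n = 1" by (metis norm_one norm_power)
  moreover have "norm q ^ Suc n < 1"
  proof -
    have "norm q ^ n \<le> 1" using \<open>norm q < 1\<close> by (simp add: power_le_one)
    then have "norm q * norm q ^ n \<le> norm q" by (simp add: mult_left_le)
    then show ?thesis using \<open>norm q < 1\<close> by simp
  qed
  ultimately show False by simp
qed

lemma qpoch_qq_Suc: "qpoch q q (Suc n) = qpoch q q n * (1 - q ^ Suc n)"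
  by (simp add: qpoch_Suc)

lemma qpoch_qq_nz: "norm (q::complex) < 1 \<Longrightarrow> qpoch q q n \<noteq> 0"
proof (induct n)
  case (Suc n)
  then show ?case using one_minus_qpow_nz[of q n] by (simp only: qpoch_qq_Suc mult_eq_0_iff) blast
qed simp



definition WW :: "complex \<Rightarrow> nat \<Rightarrow> nat \<Rightarrow> nat \<Rightarrow> complex" where
 "WW q I M k = (if k \<le> I \<and> k \<le> M then q^((I-k)*(M-k)) / (qpoch q q (I-k) * qpoch q q (M-k) * qpoch q q k) else 0)"

lemma alg_id:
  fixes q A B C D X Y Z :: complex
  assumes "X \<noteq> 0" "Y \<noteq> 0" "Z \<noteq> 0" "1 - q*A \<noteq> 0" "1 - q*B \<noteq> 0" "1 - q*C \<noteq> 0"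
  shows "(1 - A*C*q^2) * ((B*D)/((X*(1-q*A))*Y*(Z*(1-q*C))))
       = B*(D/(X*Y*(Z*(1-q*C)))) + (1-q*B)*((q*A*B*D)/((X*(1-q*A))*(Y*(1-q*B))*Z))"
proof -
  have g: "(a + q*A*c) * ((B*D)/((X*a)*Y*(Z*c))) = B*(D/(X*Y*(Z*c))) + b*((q*A*B*D)/((X*a)*(Y*b)*Z))"
    if "X \<noteq> 0" "Y \<noteq> 0" "Z \<noteq> 0" "a \<noteq> 0" "b \<noteq> 0" "c \<noteq> 0" for a b c :: complex
    using that by (simp add: field_simps)
  have h: "1 - A*C*q^2 = (1-q*A) + q*A*(1-q*C)" by (simp add: algebra_simps power2_eq_square)
  show ?thesis unfolding h by (rule g) (use assms in auto)
qed

lemma WW_local: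
  assumes q: "norm q < 1"
  shows "(1 - q^Suc I) * WW q (Suc I) M k = q^(M-k) * WW q I M k
          + (if k = 0 then 0 else (1 - q^(M-(k-1))) * WW q I M (k-1))"
proof (cases k)
  case 0
  have nz: "qpoch q q I \<noteq> 0" "qpoch q q M \<noteq> 0" "1 - q^Suc I \<noteq> 0"
    using q qpoch_qq_nz one_minus_qpow_nz by blast+
  show ?thesis using nz unfolding 0 WW_def
    by (simp add: qpoch_qq_Suc power_add field_simps)
next
  case (Suc l)
  show ?thesis
  proof (cases "l < I \<and> Suc l \<le> M")
    case True
    then obtain i j where I: "I = i + Suc l" and M: "M = j + Suc l"
      by (metis add.commute le_add_diff_inverse less_eq_Suc_le)
    have nz: "qpoch q q i \<noteq> 0" "qpoch q q j \<noteq> 0" "qpoch q q l \<noteq> 0"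
      "1 - q^Suc i \<noteq> 0" "1 - q^Suc j \<noteq> 0" "1 - q^Suc l \<noteq> 0"
      using q qpoch_qq_nz one_minus_qpow_nz by blast+
    have e1: "Suc (i + Suc l) - Suc l = Suc i" "i + Suc l - Suc l = i" "j + Suc l - Suc l = j"
       "i + Suc l - l = Suc i" "j + Suc l - l = Suc j" by auto
    have key: "(1 - q^Suc(i+Suc l)) * (q^(Suc i * j)/(qpoch q q (Suc i)*qpoch q q j*qpoch q q (Suc l)))
       = q^j*(q^(i*j)/(qpoch q q i*qpoch q q j*qpoch q q (Suc l)))
         + (1-q^Suc j)*(q^(Suc i*Suc j)/(qpoch q q (Suc i)*qpoch q q (Suc j)*qpoch q q l))"
    proof -
      have p: "q^Suc(i+Suc l) = q^i*q^l*q^2" "q^(Suc i*j) = q^j*q^(i*j)"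
        "q^(Suc i*Suc j) = q*q^i*q^j*q^(i*j)"
        by (simp_all add: power_add power2_eq_square algebra_simps)
      show ?thesis unfolding p unfolding qpoch_qq_Suc power_Suc
        by (rule alg_id) (use nz in auto)
    qed
    show ?thesis unfolding Suc I M WW_def using key by (simp add: e1)
  next
    case False
    show ?thesis
    proof (cases "l = I \<and> Suc I \<le> M")
      case True
      then obtain j where M: "M = j + Suc I" and l: "l = I"
        by (metis add.commute le_add_diff_inverse)
      have nz: "qpoch q q I \<noteq> 0" "qpoch q q j \<noteq> 0"
        "1 - q^Suc I \<noteq> 0" "1 - q^Suc j \<noteq> 0"
        using q qpoch_qq_nz one_minus_qpow_nz by blast+
      have e1: "j + Suc I - Suc I = j" "j + Suc I - I = Suc j" by auto
      show ?thesis using nz unfolding Suc M l WW_def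
        by (simp add: e1 qpoch_qq_Suc)
    next
      case False2: False
      have "WW q (Suc I) M k = 0" "WW q I M k = 0"
        using False False2 unfolding Suc WW_def by auto
      moreover have "(1 - q^(M-(k-1))) * WW q I M (k-1) = 0"
        using False False2 unfolding Suc WW_def by auto
      ultimately show ?thesis using Suc by simp
    qed
  qed
qed

lemma r_step:
  assumes q: "norm q < 1"
  shows "(1 - q^Suc I) * (\<Sum>k\<le>Suc I. WW q (Suc I) M k) = (\<Sum>k\<le>I. WW q I M k)"
proof -
  have "(1 - q^Suc I) * (\<Sum>k\<le>Suc I. WW q (Suc I) M k)
     = (\<Sum>k\<le>Suc I. q^(M-k) * WW q I M k) + (\<Sum>k\<le>Suc I. (if k = 0 then 0 else (1 - q^(M-(k-1))) * WW q I M (k-1)))"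
    by (simp only: sum_distrib_left WW_local[OF q] sum.distrib)
  also have "(\<Sum>k\<le>Suc I. q^(M-k) * WW q I M k) = (\<Sum>k\<le>I. q^(M-k) * WW q I M k)"
    by (simp add: WW_def)
  also have "(\<Sum>k\<le>Suc I. (if k = 0 then 0 else (1 - q^(M-(k-1))) * WW q I M (k-1)))
       = (\<Sum>k\<le>I. (1 - q^(M-k)) * WW q I M k)"
    by (subst sum.atMost_Suc_shift) simp
  also have "(\<Sum>k\<le>I. q^(M-k) * WW q I M k) + (\<Sum>k\<le>I. (1 - q^(M-k)) * WW q I M k) = (\<Sum>k\<le>I. WW q I M k)"
    by (simp add: sum.distrib[symmetric] algebra_simps)
  finally show ?thesis .
qed

lemma r_closed:
  assumes q: "norm q < 1"
  shows "(\<Sum>k\<le>I. WW q I M k) = 1 / (qpoch q q I * qpoch q q M)"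
proof (induct I)
  case 0
  then show ?case by (simp add: WW_def)
next
  case (Suc I)
  have nz: "1 - q^Suc I \<noteq> 0" "qpoch q q I \<noteq> 0" "qpoch q q M \<noteq> 0"
    using q qpoch_qq_nz one_minus_qpow_nz by blast+
  define S where "S = (\<Sum>k\<le>Suc I. WW q (Suc I) M k)"
  from r_step[OF q, of I M] Suc have "(1 - q^Suc I) * S = 1 / (qpoch q q I * qpoch q q M)"
    unfolding S_def by simp
  then have "S = 1 / ((qpoch q q I * (1 - q^Suc I)) * qpoch q q M)"
    using nz by (simp add: field_simps)
  then show ?case unfolding S_def qpoch_qq_Suc .
qed



definition cc :: "complex \<Rightarrow> nat \<Rightarrow> complex" where "cc q k = q ^ tri k / qpoch q q k"
definition EE :: "complex \<Rightarrow> complex \<Rightarrow> complex" where "EE q y = (\<Sum>k. cc q k * y ^ k)"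

lemma cc_0[simp]: "cc q 0 = 1" by (simp add: cc_def tri_def)

lemma cc_Suc: "cc q (Suc k) = cc q k * q ^ k / (1 - q ^ Suc k)"
  by (simp add: cc_def tri_Suc qpoch_qq_Suc power_add)

lemma E_summable_norm:
  assumes q: "norm q < 1"
  shows "summable (\<lambda>k. norm (cc q k * y ^ k))"
proof -
  define f where "f k = norm (cc q k * y ^ k)" for k
  have lim: "(\<lambda>n. norm q ^ n * norm y) \<longlonglongrightarrow> 0"
    by (rule tendsto_mult_left_zero) (rule LIMSEQ_power_zero, use q in simp)
  have "(1 - norm q) / 2 > 0" using q by simp
  from order_tendstoD(2)[OF lim this] obtain N where N: "\<And>n. n \<ge> N \<Longrightarrow> norm q ^ n * norm y < (1 - norm q) / 2"
    by (auto simp: eventually_sequentially)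
  have "summable f"
  proof (rule summable_ratio_test[of "1/2" N])
    fix n assume n: "n \<ge> N"
    have d: "norm (1 - q ^ Suc n) \<ge> 1 - norm q"
    proof -
      have "norm (q ^ Suc n) \<le> norm q"
        using q by (simp add: norm_mult norm_power power_le_one mult_left_le)
      moreover have "1 - norm (q ^ Suc n) \<le> norm (1 - q ^ Suc n)"
        using norm_triangle_ineq2[of 1 "q ^ Suc n"] by simp
      ultimately show ?thesis by simp
    qed
    have pos: "1 - norm q > 0" using q by simp
    have "f (Suc n) = f n * (norm q ^ n * norm y / norm (1 - q ^ Suc n))"
      unfolding f_def cc_Suc by (simp add: norm_mult norm_divide norm_power field_simps)
    also have "norm q ^ n * norm y / norm (1 - q ^ Suc n) \<le> 1/2"
    proof -
      have "norm q ^ n * norm y \<le> (1 - norm q) / 2" using N[OF n] by simp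
      also have "\<dots> \<le> norm (1 - q ^ Suc n) / 2" using d by simp
      finally show ?thesis using d pos by (simp add: divide_le_eq)
    qed
    then have "f n * (norm q ^ n * norm y / norm (1 - q ^ Suc n)) \<le> f n * (1/2)"
      by (rule mult_left_mono) (simp add: f_def)
    finally show "norm (f (Suc n)) \<le> 1/2 * norm (f n)" by (simp add: f_def)
  qed simp
  then show ?thesis unfolding f_def .
qed

lemma E_summable: "norm q < 1 \<Longrightarrow> summable (\<lambda>k. cc q k * y ^ k)"
  by (rule summable_norm_cancel) (rule E_summable_norm)

lemma E_func:
  assumes q: "norm q < 1"
  shows "EE q y = (1 + y) * EE q (q * y)"
proof -
  define d where "d k = cc q k * y ^ k" for k
  define e where "e k = cc q k * (q * y) ^ k" for k
  have sd: "summable d" and se: "summable e"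
    unfolding d_def e_def using E_summable[OF q] by auto
  have coef: "d (Suc k) = e (Suc k) + y * e k" for k
  proof -
    have nz: "1 - q ^ Suc k \<noteq> 0" using one_minus_qpow_nz[OF q] .
    have g: "C * Qk / (1 - q * Qk) * (y * Y) = C * Qk / (1 - q * Qk) * (q * y * (Qk * Y)) + y * (C * (Qk * Y))"
      if "1 - q * Qk \<noteq> 0" for C Qk Y :: complex
      using that by (simp add: field_simps)
    show ?thesis unfolding d_def e_def cc_Suc power_Suc power_mult_distrib
      by (rule g) (use nz in auto)
  qed
  have "(\<Sum>k. d (Suc k)) = (\<Sum>k. e (Suc k) + y * e k)" using coef by simp
  also have "\<dots> = (\<Sum>k. e (Suc k)) + y * (\<Sum>k. e k)"
    using se by (simp add: suminf_add[symmetric] summable_Suc_iff suminf_mult summable_mult)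
  finally have "suminf d - d 0 = suminf e - e 0 + y * suminf e"
    using sd se by (simp add: suminf_split_head)
  moreover have "d 0 = 1" "e 0 = 1" by (simp_all add: d_def e_def)
  ultimately have "suminf d = (1 + y) * suminf e" by (simp add: algebra_simps)
  then show ?thesis unfolding EE_def d_def e_def .
qed

lemma E_iter:
  assumes q: "norm q < 1"
  shows "EE q x = qpoch (- x) q n * EE q (q ^ n * x)"
proof (induct n)
  case (Suc n)
  have "EE q (q ^ n * x) = (1 + q ^ n * x) * EE q (q * (q ^ n * x))" by (rule E_func[OF q])
  then show ?case using Suc by (simp add: qpoch_Suc algebra_simps)
qed simp

lemma E_lim_one:
  assumes q: "norm q < 1"
  shows "(\<lambda>n. EE q (q ^ n * x)) \<longlonglongrightarrow> 1"
proof -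
  have cont: "isCont (EE q) 0"
    unfolding EE_def by (rule isCont_powser[of _ 1]) (use E_summable[OF q, of 1] in auto)
  have "(\<lambda>n. q ^ n * x) \<longlonglongrightarrow> 0"
    by (rule tendsto_mult_left_zero) (rule LIMSEQ_power_zero[OF q])
  from isCont_tendsto_compose[OF cont this] show ?thesis by (simp add: EE_def)
qed

lemma Q_lim:
  assumes q: "norm q < 1"
  shows "(\<lambda>n. qpoch (- x) q n) \<longlonglongrightarrow> EE q x"
proof -
  have ev: "eventually (\<lambda>n. EE q (q ^ n * x) \<noteq> 0) sequentially"
    by (rule tendsto_imp_eventually_ne[OF E_lim_one[OF q]]) simp
  have "(\<lambda>n. EE q x / EE q (q ^ n * x)) \<longlonglongrightarrow> EE q x / 1"
    by (intro tendsto_intros E_lim_one[OF q]) simp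
  moreover have "eventually (\<lambda>n. EE q x / EE q (q ^ n * x) = qpoch (- x) q n) sequentially"
  proof (rule eventually_mono[OF ev])
    fix n assume "EE q (q ^ n * x) \<noteq> 0"
    then show "EE q x / EE q (q ^ n * x) = qpoch (- x) q n"
      using E_iter[OF q, of x n] by (simp add: field_simps)
  qed
  ultimately show ?thesis using Lim_transform_eventually by fastforce
qed

lemma qpoch_inf_E:
  assumes q: "norm q < 1"
  shows "qpoch_inf (- x) q = EE q x"
proof -
  define f where "f k = 1 - (- x) * q ^ k" for k
  have "summable (\<lambda>k. norm (f k - 1))"
    unfolding f_def using summable_mult[OF summable_geometric[of "norm q"], of "norm x"] q
    by (simp add: norm_mult norm_power)
  then have "convergent_prod f"
    by (intro abs_convergent_prod_imp_convergent_prod summable_imp_abs_convergent_prod)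
  from convergent_prod_LIMSEQ[OF this] have "(\<lambda>n. qpoch (- x) q (Suc n)) \<longlonglongrightarrow> prodinf f"
    by (simp add: qpoch_def f_def lessThan_Suc_atMost)
  moreover have "(\<lambda>n. qpoch (- x) q (Suc n)) \<longlonglongrightarrow> EE q x"
    by (rule LIMSEQ_Suc[OF Q_lim[OF q]])
  ultimately have "prodinf f = EE q x" using LIMSEQ_unique by blast
  moreover have "(\<lambda>k. 1 - (-x)*q^k) = f" by (rule ext) (simp add: f_def)
  ultimately show ?thesis unfolding qpoch_inf_def by simp
qed



lemma Q_bound:
  assumes q: "norm (q::complex) < 1"
  shows "norm (qpoch (- x) q j) \<le> exp (norm x / (1 - norm q))"
proof -
  have "norm (qpoch (- x) q j) \<le> (\<Prod>k<j. norm (1 - (- x) * q ^ k))"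
    unfolding qpoch_def by (rule norm_prod_le)
  also have "\<dots> \<le> (\<Prod>k<j. exp (norm x * norm q ^ k))"
  proof (rule prod_mono)
    fix k
    have "norm (1 - (- x) * q ^ k) \<le> 1 + norm x * norm q ^ k"
      using norm_triangle_ineq[of 1 "x * q ^ k"] by (simp add: norm_mult norm_power)
    also have "\<dots> \<le> exp (norm x * norm q ^ k)" by simp
    finally show "0 \<le> norm (1 - (- x) * q ^ k) \<and> norm (1 - (- x) * q ^ k) \<le> exp (norm x * norm q ^ k)"
      by simp
  qed
  also have "\<dots> = exp (\<Sum>k<j. norm x * norm q ^ k)" by (simp add: exp_sum)
  also have "(\<Sum>k<j. norm x * norm q ^ k) \<le> norm x / (1 - norm q)"
  proof -
    have "(\<Sum>k<j. norm q ^ k) \<le> (\<Sum>k. norm q ^ k)"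
      by (rule sum_le_suminf) (use summable_geometric[of "norm q"] q in auto)
    also have "\<dots> = 1 / (1 - norm q)" using suminf_geometric[of "norm q"] q by simp
    finally have "norm x * (\<Sum>k<j. norm q ^ k) \<le> norm x * (1 / (1 - norm q))"
      by (rule mult_left_mono) simp
    then show ?thesis by (simp add: sum_distrib_left)
  qed
  then have "exp (\<Sum>k<j. norm x * norm q ^ k) \<le> exp (norm x / (1 - norm q))" by simp
  finally show ?thesis .
qed

lemma prod_summable:
  fixes u :: "'a \<Rightarrow> real" and v :: "nat \<Rightarrow> real"
  assumes u: "u summable_on UNIV" and u0: "\<And>z. u z \<ge> 0"
    and v: "summable v" and v0: "\<And>k. v k \<ge> 0"
  shows "(\<lambda>(z,k). u z * v k) summable_on UNIV"
proof -
  have vh: "(v has_sum suminf v) UNIV"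
    by (rule norm_summable_imp_has_sum) (use v v0 in \<open>auto intro: summable_sums\<close>)
  have "(\<lambda>(z,k). u z * v k) summable_on Sigma UNIV (\<lambda>_. UNIV)"
  proof (rule summable_on_SigmaI[where g = "\<lambda>z. u z * suminf v"])
    show "((\<lambda>y. case (z, y) of (z, k) \<Rightarrow> u z * v k) has_sum u z * suminf v) UNIV" for z
      using has_sum_cmult_right[OF vh, of "u z"] by simp
    show "(\<lambda>z. u z * suminf v) summable_on UNIV"
      by (rule summable_on_cmult_left[OF u])
    show "0 \<le> (case (z, k) of (z, k) \<Rightarrow> u z * v k)" for z k using u0 v0 by simp
  qed
  then show ?thesis by simp
qed



theorem theorem1p1:
  fixes q x :: complex and a :: "int \<Rightarrow> complex"
  assumes hq: "norm q < 1"
    and hx: "\<And>j. qpoch (- x) q j \<noteq> 0"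
    and conv1: "(\<lambda>(i, j). norm (a (int i - int j) * q ^ (j * (j - 1) div 2) * x ^ j
                   / (qpoch q q i * qpoch q q j))) summable_on (UNIV :: (nat \<times> nat) set)"
    and conv2: "(\<lambda>(i, j). norm (a (int i - int j) * q ^ (j * (j - 1) div 2 + i * j) * x ^ j
                   / (qpoch q q i * qpoch q q j * qpoch (- x) q j))) summable_on (UNIV :: (nat \<times> nat) set)"
  shows "(\<Sum>\<^sub>\<infinity>(i, j)\<in>(UNIV :: (nat \<times> nat) set).
            a (int i - int j) * q ^ (j * (j - 1) div 2) * x ^ j / (qpoch q q i * qpoch q q j))
       = qpoch_inf (- x) q *
         (\<Sum>\<^sub>\<infinity>(i, j)\<in>(UNIV :: (nat \<times> nat) set).
            a (int i - int j) * q ^ (j * (j - 1) div 2 + i * j) * x ^ j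
              / (qpoch q q i * qpoch q q j * qpoch (- x) q j))"
proof -
  define P where "P = qpoch q q"
  define Q where "Q = qpoch (- x) q"
  define G where "G = (\<lambda>(i, j). a (int i - int j) * q ^ (j * (j - 1) div 2 + i * j) * x ^ j
              / (qpoch q q i * qpoch q q j * qpoch (- x) q j))"
  define F where "F = (\<lambda>(i, j). a (int i - int j) * q ^ (j * (j - 1) div 2) * x ^ j / (qpoch q q i * qpoch q q j))"
  define H where "H = (\<lambda>(i::nat, j::nat). a (int i - int j) * q ^ (tri j + i * j) * x ^ j / (P i * P j))"
  define g where "g = (\<lambda>((i::nat, j::nat), k::nat). H (i, j) * (cc q k * (q ^ j * x) ^ k))"
  define Bd where "Bd = exp (norm x / (1 - norm q))"
  define b where "b k = norm (cc q k * x ^ k)" for k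
  have Pnz: "P n \<noteq> 0" for n unfolding P_def using qpoch_qq_nz[OF hq] .
  have GH: "G (i, j) = H (i, j) / Q j" for i j
    unfolding G_def H_def P_def Q_def tri_def by simp
  have normG: "(\<lambda>ij. norm (G ij)) summable_on UNIV"
    using conv2 unfolding G_def by (simp add: case_prod_unfold)
  have inner: "EE q x * G (i, j) = (\<Sum>\<^sub>\<infinity>k. g ((i, j), k))" for i j
  proof -
    have sn: "summable (\<lambda>k. norm (cc q k * (q ^ j * x) ^ k))" by (rule E_summable_norm[OF hq])
    have "(\<Sum>\<^sub>\<infinity>k. cc q k * (q ^ j * x) ^ k) = EE q (q ^ j * x)"
      unfolding EE_def by (rule infsumI, rule norm_summable_imp_has_sum[OF sn summable_sums[OF summable_norm_cancel[OF sn]]])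
    then have "(\<Sum>\<^sub>\<infinity>k. g ((i, j), k)) = H (i, j) * EE q (q ^ j * x)"
      unfolding g_def by (simp add: infsum_cmult_right')
    also have "\<dots> = EE q x * G (i, j)"
      using E_iter[OF hq, of x j] hx[of j] unfolding GH Q_def by (simp add: field_simps)
    finally show ?thesis by simp
  qed
  have bsum: "summable b" unfolding b_def by (rule E_summable_norm[OF hq])
  have gbound: "norm (g ((i, j), k)) \<le> (Bd * norm (G (i, j))) * b k" for i j k
  proof -
    have "norm (H (i, j)) = norm (G (i, j)) * norm (Q j)"
      unfolding GH using hx[of j] by (simp add: Q_def norm_divide)
    also have "\<dots> \<le> norm (G (i, j)) * Bd"
      unfolding Bd_def Q_def by (rule mult_left_mono[OF Q_bound[OF hq]]) simp
    finally have h1: "norm (H (i, j)) \<le> Bd * norm (G (i, j))" by (simp add: mult.commute)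
    have "norm (cc q k * (q ^ j * x) ^ k) = norm (cc q k) * (norm q ^ j) ^ k * norm x ^ k"
      by (simp add: norm_mult norm_power power_mult_distrib)
    also have "\<dots> \<le> norm (cc q k) * 1 * norm x ^ k"
      using hq by (intro mult_right_mono mult_left_mono power_le_one) auto
    finally have h2: "norm (cc q k * (q ^ j * x) ^ k) \<le> b k" by (simp add: b_def norm_mult norm_power)
    have "norm (g ((i,j),k)) = norm (H (i,j)) * norm (cc q k * (q^j*x)^k)"
      unfolding g_def by (simp add: norm_mult)
    also have "\<dots> \<le> (Bd * norm (G (i,j))) * b k"
      by (rule mult_mono[OF h1 h2]) (auto simp: Bd_def)
    finally show ?thesis .
  qed
  have bnd_sum: "(\<lambda>(ij, k). (Bd * norm (G ij)) * b k) summable_on UNIV"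
  proof (rule prod_summable[OF _ _ bsum])
    show "(\<lambda>ij. Bd * norm (G ij)) summable_on UNIV" by (rule summable_on_cmult_right[OF normG])
  qed (auto simp: b_def Bd_def)
  have gsum: "g summable_on UNIV"
  proof (rule abs_summable_summable, rule summable_on_comparison_test[OF bnd_sum])
    fix z :: "(nat \<times> nat) \<times> nat"
    obtain i j k where z: "z = ((i, j), k)" by (metis prod.exhaust)
    show "norm (g z) \<le> (case z of (ij, k) \<Rightarrow> Bd * norm (G ij) * b k)"
      unfolding z using gbound by simp
  qed simp
  have "qpoch_inf (- x) q * infsum G UNIV = infsum (\<lambda>ij. EE q x * G ij) UNIV"
    by (simp add: qpoch_inf_E[OF hq] infsum_cmult_right')
  also have "\<dots> = infsum (\<lambda>ij. infsum (\<lambda>k. g (ij, k)) UNIV) UNIV"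
    using inner by (metis surj_pair)
  also have "\<dots> = infsum (\<lambda>(ij, k). g (ij, k)) (Sigma UNIV (\<lambda>_. UNIV))"
    by (rule infsum_Sigma'_banach) (use gsum in simp)
  also have "\<dots> = infsum g UNIV" by simp
  finally have R: "qpoch_inf (- x) q * infsum G UNIV = infsum g UNIV" .
  define Bs where "Bs = (\<lambda>(I::nat, M::nat). {k. k \<le> I \<and> k \<le> M})"
  define \<phi> where "\<phi> = (\<lambda>((I::nat, M::nat), k::nat). ((I - k, M - k), k))"
  have bij: "bij_betw \<phi> (Sigma UNIV Bs) UNIV"
    by (rule bij_betw_byWitness[where f' = "\<lambda>((i,j),k). ((i+k, j+k), k)"]) (auto simp: \<phi>_def Bs_def)
  have gphi_sum: "(\<lambda>z. g (\<phi> z)) summable_on Sigma UNIV Bs"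
    using summable_on_reindex_bij_betw[OF bij, of g] gsum by simp
  have "infsum g UNIV = infsum (\<lambda>z. g (\<phi> z)) (Sigma UNIV Bs)"
    using infsum_reindex_bij_betw[OF bij, of g] by simp
  also have "\<dots> = infsum (\<lambda>IM. infsum (\<lambda>k. g (\<phi> (IM, k))) (Bs IM)) UNIV"
  proof -
    have eq: "(\<lambda>(x,y). g (\<phi> (x,y))) = (\<lambda>z. g (\<phi> z))" by auto
    show ?thesis
      using infsum_Sigma'_banach[of "\<lambda>IM k. g (\<phi> (IM,k))" UNIV Bs] gphi_sum unfolding eq by simp
  qed
  also have "\<dots> = infsum F UNIV"
  proof (rule infsum_cong)
    fix IM :: "nat \<times> nat"
    obtain I M where IM: "IM = (I, M)" by fastforce
    have fin: "finite (Bs (I, M))" unfolding Bs_def by simp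
    have trm: "g (\<phi> ((I, M), k)) = a (int I - int M) * q ^ tri M * x ^ M * WW q I M k"
      if "k \<in> Bs (I, M)" for k
    proof -
      define i where "i = I - k"
      define j where "j = M - k"
      have I: "I = i + k" and M: "M = j + k" using that unfolding i_def j_def Bs_def by auto
      show ?thesis unfolding g_def H_def \<phi>_def WW_def I M cc_def
        using Pnz by (simp add: tri_add power_add power_mult_distrib power_mult P_def field_simps)
    qed
    have "infsum (\<lambda>k. g (\<phi> (IM, k))) (Bs IM) = (\<Sum>k\<in>Bs (I, M). g (\<phi> ((I, M), k)))"
      unfolding IM using fin by simp
    also have "\<dots> = (\<Sum>k\<in>Bs (I, M). a (int I - int M) * q ^ tri M * x ^ M * WW q I M k)"
      using trm by (rule sum.cong[OF refl])
    also have "\<dots> = a (int I - int M) * q ^ tri M * x ^ M * (\<Sum>k\<in>Bs (I, M). WW q I M k)"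
      by (simp add: sum_distrib_left)
    also have "(\<Sum>k\<in>Bs (I, M). WW q I M k) = (\<Sum>k\<le>I. WW q I M k)"
      by (rule sum.mono_neutral_left) (auto simp: Bs_def WW_def)
    also have "\<dots> = 1 / (qpoch q q I * qpoch q q M)" by (rule r_closed[OF hq])
    finally show "infsum (\<lambda>k. g (\<phi> (IM, k))) (Bs IM) = F IM"
      unfolding IM F_def tri_def by simp
  qed
  finally have "infsum F UNIV = qpoch_inf (- x) q * infsum G UNIV" using R by simp
  then show ?thesis unfolding F_def G_def .
qed


end
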